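(* Let $q$ be a power of an odd prime, $0<r_1<r_2<\cdots<r_k<n$ integers, $a_1,\dots,a_k\in\mathbb{F}_{q^n}^*$, $S(x)=\sum_{i=1}^k a_ix^{q^{r_i}}$, and $0<t<n$. (1) If $0<t<r_1$ and the multiplicative order of each $a_i$ ($i=1,\dots,k$) divides $q^t-1$, then $S(x)$ is a scattered polynomial of index $t$ over $\mathbb{F}_{q^n}$ if and only if $S^t(x)=\sum_{i=1}^k a_ix^{q^{r_i-t}}$ is a scattered polynomial of index $0$ over $\mathbb{F}_{q^n}$. (2) If $r_1<t<n$ and the multiplicative order of each $a_i$ ($i=1,\dots,k$) divides $q^{r_1}-1$, then $S(x)$ is a scattered polynomial of index $t$ over $\mathbb{F}_{q^n}$ if and only if $T(x)=a_1x+\sum_{i=2}^k a_ix^{q^{r_i-r_1}}$ is a scattered polynomial of index $t-r_1$ over $\mathbb{F}_{q^n}$.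
   Context: An $\mathbb{F}_q$-linearized polynomial $S\in\mathbb{F}_{q^n}[x]$ is a scattered polynomial of index $t$ over $\mathbb{F}_{q^n}$ if for all $y,z\in\mathbb{F}_{q^n}^*$, $\frac{S(y)}{y^{q^t}}=\frac{S(z)}{z^{q^t}}$ implies $y/z\in\mathbb{F}_q$. *)

theory Defs
  imports "HOL-Computational_Algebra.Primes"
begin

text \<open>The ambient field F_{q^n} is a finite field type 'a with CARD('a) = q^n.
  The subfield F_q is the set of elements fixed by x |-> x^q.\<close>

definition in_Fq :: "nat \<Rightarrow> 'a::field \<Rightarrow> bool" where
  "in_Fq q x \<longleftrightarrow> x ^ q = x"

definition mult_ord :: "'a::field \<Rightarrow> nat" where
  "mult_ord a = (LEAST d. 0 < d \<and> a ^ d = 1)"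

definition scattered :: "nat \<Rightarrow> nat \<Rightarrow> ('a::field \<Rightarrow> 'a) \<Rightarrow> bool" where
  "scattered q t S \<longleftrightarrow>
     (\<forall>y z. y \<noteq> 0 \<longrightarrow> z \<noteq> 0 \<longrightarrow> S y / y ^ (q ^ t) = S z / z ^ (q ^ t)
        \<longrightarrow> in_Fq q (y / z))"

end

theory Submission
  imports Defs
begin

lemma char_dvd_card: "CHAR('a::{field,finite}) dvd card (UNIV::'a set)"
proof -
  define c where "c = CHAR('a)"
  have cpos: "c > 0" unfolding c_def by (rule finite_imp_CHAR_pos) simp
  define A where "A x = {y::'a. \<exists>i::int. y = x + of_int i}" for x
  have A_img: "A x = (\<lambda>i. x + of_nat i) ` {..<c}" for x
  proof
    show "A x \<subseteq> (\<lambda>i. x + of_nat i) ` {..<c}"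
    proof
      fix y assume "y \<in> A x"
      then obtain i::int where y: "y = x + of_int i" unfolding A_def by auto
      have "of_int i = (of_int (i mod int c) :: 'a)"
      proof -
        have "of_int (i - i mod int c) = (0::'a)"
          unfolding of_int_eq_0_iff_char_dvd c_def[symmetric] by (rule dvd_minus_mod)
        then show ?thesis by simp
      qed
      also have "\<dots> = of_nat (nat (i mod int c))" using cpos by simp
      finally show "y \<in> (\<lambda>i. x + of_nat i) ` {..<c}" using y cpos
        by (intro image_eqI[of _ _ "nat (i mod int c)"]) (auto simp: nat_less_iff)
    qed
  next
    show "(\<lambda>i. x + of_nat i) ` {..<c} \<subseteq> A x" unfolding A_def
      by (auto intro!: exI[of _ "int _"])
  qed
  have inj: "inj_on (\<lambda>i. x + (of_nat i::'a)) {..<c}" for x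
  proof
    fix i j assume ij: "i \<in> {..<c}" "j \<in> {..<c}" "x + of_nat i = x + (of_nat j::'a)"
    then have "of_int (int i - int j) = (0::'a)" by simp
    then have "int c dvd int i - int j" unfolding of_int_eq_0_iff_char_dvd c_def .
    show "i = j"
    proof (rule ccontr)
      assume "i \<noteq> j"
      then have "\<bar>int c\<bar> \<le> \<bar>int i - int j\<bar>"
        using dvd_imp_le_int[OF _ \<open>int c dvd int i - int j\<close>] by simp
      with ij(1,2) show False by auto
    qed
  qed
  have cardA: "card (A x) = c" for x using inj[of x] by (simp add: A_img card_image)
  have disj: "A x = A y" if "A x \<inter> A y \<noteq> {}" for x y
  proof -
    from that obtain z i j where "z = x + of_int i" "z = y + of_int j" unfolding A_def by blast
    then have y: "y = x + of_int (i - j)" by (simp add: algebra_simps)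
    have 1: "\<exists>l'. w = x + of_int (i - j) + of_int l'" if "w = x + of_int l" for w l
      using that by (intro exI[of _ "l - (i - j)"]) simp
    have 2: "\<exists>l'. w = x + of_int l'" if "w = x + of_int (i - j) + of_int l" for w l
      using that by (intro exI[of _ "l + (i - j)"]) simp
    show ?thesis unfolding A_def y using 1 2 by blast
  qed
  have U: "\<Union>(range A) = UNIV" unfolding A_def by (auto intro!: exI[of _ 0])
  have "c * card (range A) = card (\<Union>(range A))"
    apply (rule card_partition)
    apply (auto simp: cardA)
    apply (metis disj disjoint_iff)+
    done
  then show ?thesis unfolding U c_def[symmetric] by (metis dvd_triv_left)
qed

lemma char_eq:
  assumes p: "prime p" and mn: "0 < m * n" and card: "card (UNIV :: 'a::{field,finite} set) = (p ^ m) ^ n"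
  shows "CHAR('a) = p"
proof -
  have cpos: "CHAR('a) > 0" by (rule finite_imp_CHAR_pos) simp
  have cp: "prime CHAR('a)" using prime_CHAR_semidom[OF cpos] .
  have "CHAR('a) dvd p ^ (m * n)" using char_dvd_card[where 'a='a] card by (simp add: power_mult)
  then have "CHAR('a) dvd p" using cp prime_dvd_power by blast
  then show ?thesis using cp p by (simp add: primes_dvd_imp_eq)
qed

lemma frob_sum:
  assumes "CHAR('a::{field,finite}) = p" "prime p" "q = p ^ m"
  shows "(sum (f :: _ \<Rightarrow> 'a) A) ^ (q ^ s) = sum (\<lambda>i. f i ^ (q ^ s)) A"
  by (rule freshmans_dream_sum'[where n = "m * s"]) (use assms in \<open>auto simp: power_mult\<close>)

lemma frob_add:
  assumes "CHAR('a::{field,finite}) = p" "prime p" "q = p ^ m"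
  shows "((x::'a) + y) ^ (q ^ s) = x ^ (q ^ s) + y ^ (q ^ s)"
  by (rule freshmans_dream'[where n = "m * s"]) (use assms in \<open>auto simp: power_mult\<close>)

lemma frob_inj:
  assumes "CHAR('a::{field,finite}) = p" "prime p" "q = p ^ m"
    and "(x::'a) ^ (q ^ s) = y ^ (q ^ s)"
  shows "x = y"
proof -
  have "x ^ (q ^ s) = (y + (x - y)) ^ (q ^ s)" by simp
  also have "\<dots> = y ^ (q ^ s) + (x - y) ^ (q ^ s)" by (rule frob_add[OF assms(1-3)])
  finally have "(x - y) ^ (q ^ s) = 0" using assms(4) by simp
  then show ?thesis by simp
qed

lemma fix_pow:
  assumes a: "(a::'a::{field,finite}) \<noteq> 0" and d: "mult_ord a dvd N - 1" and N: "N \<ge> 1"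
  shows "a ^ N = a"
proof -
  have "\<not> inj (\<lambda>i::nat. a ^ i)"
  proof
    assume "inj (\<lambda>i::nat. a ^ i)"
    moreover have "finite (range (\<lambda>i::nat. a ^ i))" by simp
    ultimately have "finite (UNIV :: nat set)" using finite_imageD by blast
    then show False by simp
  qed
  then obtain i0 j0 :: nat where ij0: "a ^ i0 = a ^ j0" "i0 \<noteq> j0"
    unfolding inj_def by blast
  obtain i j :: nat where ij: "a ^ i = a ^ j" "i < j"
  proof (cases "i0 < j0")
    case True then show ?thesis using that ij0 by blast
  next
    case False then have "j0 < i0" using ij0(2) by simp
    then show ?thesis using that ij0(1)[symmetric] by blast
  qed
  have "a ^ j = a ^ i * a ^ (j - i)" using ij(2) by (simp flip: power_add)
  then have "a ^ (j - i) = 1" using ij(1) a by simp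
  then have ex: "\<exists>d. 0 < d \<and> a ^ d = 1" using ij(2) by (intro exI[of _ "j - i"]) simp
  have "a ^ mult_ord a = 1" unfolding mult_ord_def using LeastI_ex[OF ex] by simp
  then have "a ^ (N - 1) = 1" using d by (auto elim!: dvdE simp: power_mult)
  then have "a ^ (N - 1) * a = a" by simp
  moreover have "a ^ N = a ^ (N - 1) * a"
  proof -
    have "N = Suc (N - 1)" using N by simp
    then show ?thesis by (metis power_Suc2)
  qed
  ultimately show ?thesis by simp
qed

lemma transfer:
  fixes S T :: "'a::field \<Rightarrow> 'a"
  assumes inj: "\<And>x y::'a. x ^ N = y ^ N \<Longrightarrow> x = y"
    and ST: "\<And>y. S y = (T y) ^ N"
    and yy: "\<And>y::'a. y ^ (q ^ t) = (y ^ (q ^ t')) ^ N"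
  shows "scattered q t S = scattered q t' T"
proof -
  have eq: "S y / y ^ (q ^ t) = (T y / y ^ (q ^ t')) ^ N" for y
    unfolding ST yy[of y] by (rule power_divide[symmetric])
  have "S y / y ^ (q ^ t) = S z / z ^ (q ^ t) \<longleftrightarrow> T y / y ^ (q ^ t') = T z / z ^ (q ^ t')" for y z
  proof -
    have iff: "u ^ N = v ^ N \<longleftrightarrow> u = v" for u v :: 'a using inj by auto
    show ?thesis by (simp only: eq iff)
  qed
  then show ?thesis unfolding scattered_def by simp
qed

lemma r_ge:
  assumes "\<forall>i\<in>{1..<k}. r i < r (Suc i)" "1 \<le> i" "i \<le> k"
  shows "(r::nat\<Rightarrow>nat) 1 \<le> r i"
  using assms(2,3)
proof (induction i)
  case 0 then show ?case by simp
next
  case (Suc i)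
  show ?case
  proof (cases "i = 0")
    case True then show ?thesis by simp
  next
    case False
    then have "r 1 \<le> r i" using Suc by simp
    moreover have "r i < r (Suc i)" using assms(1) Suc.prems False by simp
    ultimately show ?thesis by simp
  qed
qed

theorem mainTheorem6:
  fixes q n k t :: nat and r :: "nat \<Rightarrow> nat" and a :: "nat \<Rightarrow> 'a::{field,finite}"
    and S :: "'a \<Rightarrow> 'a"
  assumes q_pow: "\<exists>p m. prime (p::nat) \<and> odd p \<and> 0 < m \<and> q = p ^ m"
    and card: "card (UNIV :: 'a set) = q ^ n"
    and k: "1 \<le> k"
    and r1: "0 < r 1"
    and r_mono: "\<forall>i\<in>{1..<k}. r i < r (Suc i)"
    and rk: "r k < n"
    and a_nz: "\<forall>i\<in>{1..k}. a i \<noteq> 0"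
    and t: "0 < t" "t < n"
    and S_def: "S = (\<lambda>x. \<Sum>i=1..k. a i * x ^ (q ^ r i))"
  shows "(t < r 1 \<and> (\<forall>i\<in>{1..k}. mult_ord (a i) dvd q ^ t - 1) \<longrightarrow>
            (scattered q t S \<longleftrightarrow>
             scattered q 0 (\<lambda>x. \<Sum>i=1..k. a i * x ^ (q ^ (r i - t)))))
       \<and> (r 1 < t \<and> (\<forall>i\<in>{1..k}. mult_ord (a i) dvd q ^ (r 1) - 1) \<longrightarrow>
            (scattered q t S \<longleftrightarrow>
             scattered q (t - r 1) (\<lambda>x. a 1 * x + (\<Sum>i=2..k. a i * x ^ (q ^ (r i - r 1))))))"
proof -
  obtain p m where p: "prime p" "odd p" "0 < m" "q = p ^ m" using q_pow by blast
  have n0: "0 < n" using t by simp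
  have ch: "CHAR('a) = p" using char_eq[OF p(1), of m n] card p n0 by simp
  have q1: "q \<ge> 1" using p(1,4) prime_gt_0_nat by (simp add: Suc_leI)
  have rge: "r 1 \<le> r i" if "i \<in> {1..k}" for i using r_ge[OF r_mono] that by simp
  note fs = frob_sum[OF ch p(1) p(4)]
  note fi = frob_inj[OF ch p(1) p(4)]
  show ?thesis
  proof (intro conjI impI)
    assume h: "t < r 1 \<and> (\<forall>i\<in>{1..k}. mult_ord (a i) dvd q ^ t - 1)"
    show "scattered q t S \<longleftrightarrow> scattered q 0 (\<lambda>x. \<Sum>i=1..k. a i * x ^ (q ^ (r i - t)))"
    proof (rule transfer[where N = "q ^ t"])
      show "x = y" if "x ^ q ^ t = y ^ q ^ t" for x y :: 'a using fi that by blast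
      show "y ^ q ^ t = (y ^ q ^ 0) ^ q ^ t" for y :: 'a by simp
      show "S y = (\<Sum>i=1..k. a i * y ^ (q ^ (r i - t))) ^ q ^ t" for y
        unfolding fs S_def
      proof (rule sum.cong[OF refl])
        fix i assume i: "i \<in> {1..k}"
        have ai: "a i ^ q ^ t = a i" using fix_pow[of "a i" "q ^ t"] h i a_nz q1 by simp
        have "q ^ (r i - t) * q ^ t = q ^ r i" using rge[OF i] h by (simp flip: power_add)
        then show "a i * y ^ q ^ r i = (a i * y ^ q ^ (r i - t)) ^ q ^ t"
          by (simp add: power_mult_distrib ai flip: power_mult)
      qed
    qed
  next
    assume h: "r 1 < t \<and> (\<forall>i\<in>{1..k}. mult_ord (a i) dvd q ^ (r 1) - 1)"
    show "scattered q t S \<longleftrightarrow>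
             scattered q (t - r 1) (\<lambda>x. a 1 * x + (\<Sum>i=2..k. a i * x ^ (q ^ (r i - r 1))))"
    proof (rule transfer[where N = "q ^ r 1"])
      show "x = y" if "x ^ q ^ r 1 = y ^ q ^ r 1" for x y :: 'a using fi that by blast
      show "y ^ q ^ t = (y ^ q ^ (t - r 1)) ^ q ^ r 1" for y :: 'a
        using h by (simp flip: power_mult power_add)
      have ai: "a i ^ q ^ r 1 = a i" if i: "i \<in> {1..k}" for i
        using fix_pow[of "a i" "q ^ r 1"] h i a_nz q1 by simp
      fix y :: 'a
      have "(a 1 * y + (\<Sum>i=2..k. a i * y ^ (q ^ (r i - r 1)))) ^ q ^ r 1
          = (\<Sum>i=1..k. (if i = 1 then a 1 * y else a i * y ^ (q ^ (r i - r 1)))) ^ q ^ r 1"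
        using k by (simp add: sum.atLeast_Suc_atMost numeral_2_eq_2)
      also have "\<dots> = (\<Sum>i=1..k. (if i = 1 then a 1 * y else a i * y ^ (q ^ (r i - r 1))) ^ q ^ r 1)"
        by (rule fs)
      also have "\<dots> = S y" unfolding S_def
      proof (rule sum.cong[OF refl])
        fix i assume i: "i \<in> {1..k}"
        have "q ^ (r i - r 1) * q ^ r 1 = q ^ r i" using rge[OF i] by (simp flip: power_add)
        then show "(if i = 1 then a 1 * y else a i * y ^ (q ^ (r i - r 1))) ^ q ^ r 1 = a i * y ^ q ^ r i"
          using ai[OF i] by (auto simp add: power_mult_distrib simp flip: power_mult)
      qed
      finally show "S y = (a 1 * y + (\<Sum>i=2..k. a i * y ^ (q ^ (r i - r 1)))) ^ q ^ r 1" by simp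
    qed
  qed
qed

end
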